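(* Let $m\ge 2$, $c\ge 0$, and let $x=((x^1,n_1),\dots,(x^q,n_q))$ (with $q\ge 2$) be a non-convergent Nash equilibrium of the best-worst rule $s=(c,m)$. Then $n_1\ge 2$ and $n_q\ge 2$, and moreover $0<x^1$ and $x^q<1$.
   Context: Setting: voters' ideal points are distributed uniformly (unit mass, Lebesgue measure) on $[0,1]$. There are $m$ candidates; a profile is $x=(x_1,\dots,x_m)\in[0,1]^m$. A voter with ideal point $y$ ranks candidates by distance $|x_i-y|$ (closer is better); ties are broken by a fair lottery (uniformly random strict order among tied candidates). Under the best-worst rule $s=(c,m)$ ($c\ge0$), a candidate receives $1$ point from each voter ranking her first, $-c$ from each voter ranking her last ($m$-th), and $0$ otherwise; $v_i(x)$ is candidate $i$'s expected total points. A (pure-strategy Nash) equilibrium is a profile $x^*$ with $v_i(x^* )\ge v_i(t,x^*_{-i})$ for all $i$ and $t\in[0,1]$ ($(t,x_{-i})$ is $x$ with $x_i$ replaced by $t$); it is non-convergent (NCNE) if at least two platforms are distinct. A profile determines its distinct occupied positions $x^1<\dots<x^q$, with $n_j$ the number of candidates at $x^j$; we write $x=((x^1,n_1),\dots,(x^q,n_q))$. *)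

theory Defs
  imports "HOL-Analysis.Analysis"
begin

(* Candidates are indexed 0..m-1; a profile is x :: nat => real (only x 0..x (m-1) matter). *)

definition min_dist :: "nat \<Rightarrow> (nat \<Rightarrow> real) \<Rightarrow> real \<Rightarrow> real" where
  "min_dist m x y = Min ((\<lambda>j. \<bar>x j - y\<bar>) ` {..<m})"

definition max_dist :: "nat \<Rightarrow> (nat \<Rightarrow> real) \<Rightarrow> real \<Rightarrow> real" where
  "max_dist m x y = Max ((\<lambda>j. \<bar>x j - y\<bar>) ` {..<m})"

(* probability that voter y ranks candidate i first (fair lottery among tied candidates) *)
definition prob_first :: "nat \<Rightarrow> (nat \<Rightarrow> real) \<Rightarrow> nat \<Rightarrow> real \<Rightarrow> real" where
  "prob_first m x i y =
     (if \<bar>x i - y\<bar> = min_dist m x y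
      then 1 / real (card {j. j < m \<and> \<bar>x j - y\<bar> = min_dist m x y}) else 0)"

definition prob_last :: "nat \<Rightarrow> (nat \<Rightarrow> real) \<Rightarrow> nat \<Rightarrow> real \<Rightarrow> real" where
  "prob_last m x i y =
     (if \<bar>x i - y\<bar> = max_dist m x y
      then 1 / real (card {j. j < m \<and> \<bar>x j - y\<bar> = max_dist m x y}) else 0)"

(* expected score v_i(x) under best-worst rule (c,m), voters uniform on [0,1] *)
definition bw_score :: "real \<Rightarrow> nat \<Rightarrow> (nat \<Rightarrow> real) \<Rightarrow> nat \<Rightarrow> real" where
  "bw_score c m x i = integral {0..1} (\<lambda>y. prob_first m x i y - c * prob_last m x i y)"

definition is_profile :: "nat \<Rightarrow> (nat \<Rightarrow> real) \<Rightarrow> bool" where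
  "is_profile m x \<longleftrightarrow> (\<forall>i<m. x i \<in> {0..1})"

definition bw_equilibrium :: "real \<Rightarrow> nat \<Rightarrow> (nat \<Rightarrow> real) \<Rightarrow> bool" where
  "bw_equilibrium c m x \<longleftrightarrow> is_profile m x \<and>
     (\<forall>i<m. \<forall>t\<in>{0..1}. bw_score c m x i \<ge> bw_score c m (x(i := t)) i)"

definition positions :: "nat \<Rightarrow> (nat \<Rightarrow> real) \<Rightarrow> real set" where
  "positions m x = x ` {..<m}"

definition mult_at :: "nat \<Rightarrow> (nat \<Rightarrow> real) \<Rightarrow> real \<Rightarrow> nat" where
  "mult_at m x p = card {i. i < m \<and> x i = p}"

end

theory Submission imports Defs begin

lemma card_sum: "card {j. j < (m::nat) \<and> P j} = (\<Sum>j<m. if P j then 1 else (0::nat))"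
proof -
  have "{j. j < m \<and> P j} = {j\<in>{..<m}. P j}" by auto
  moreover have "card {j\<in>{..<m}. P j} = (\<Sum>j\<in>{j\<in>{..<m}. P j}. (1::nat))" by simp
  moreover have "\<dots> = (\<Sum>j<m. if P j then 1 else 0)" by (rule sum.inter_filter) simp
  ultimately show ?thesis by simp
qed

lemma meas_pf[measurable]: "(\<lambda>y. prob_first m x i y) \<in> borel_measurable borel"
  unfolding prob_first_def min_dist_def card_sum
  by measurable
lemma meas_pl[measurable]: "(\<lambda>y. prob_last m x i y) \<in> borel_measurable borel"
  unfolding prob_last_def max_dist_def card_sum
  by measurable

lemma inv_nat_le1: "1 / real (n::nat) \<le> 1"
  by (cases n) auto

lemma pf_ge0: "0 \<le> prob_first m x i y" by (simp add: prob_first_def)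
lemma pf_le1: "prob_first m x i y \<le> 1" by (simp add: prob_first_def inv_nat_le1)
lemma pl_ge0: "0 \<le> prob_last m x i y" by (simp add: prob_last_def)
lemma pl_le1: "prob_last m x i y \<le> 1" by (simp add: prob_last_def inv_nat_le1)

lemma min_dist_le: "j < m \<Longrightarrow> min_dist m x y \<le> \<bar>x j - y\<bar>"
  unfolding min_dist_def by (rule Min_le) auto
lemma max_dist_ge: "j < m \<Longrightarrow> \<bar>x j - y\<bar> \<le> max_dist m x y"
  unfolding max_dist_def by (rule Max_ge) auto

lemma pf_one:
  assumes "i < m" "\<forall>j<m. j \<noteq> i \<longrightarrow> \<bar>x i - y\<bar> < \<bar>x j - y\<bar>"
  shows "prob_first m x i y = 1"
proof -
  have md: "min_dist m x y = \<bar>x i - y\<bar>"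
    unfolding min_dist_def
    apply (rule Min_eqI) using assms by (auto simp: less_imp_le)
  have "{j. j < m \<and> \<bar>x j - y\<bar> = min_dist m x y} = {i}"
    using assms md by fastforce
  then show ?thesis using md by (simp add: prob_first_def)
qed

lemma pf_zero:
  assumes "j < m" "\<bar>x j - y\<bar> < \<bar>x i - y\<bar>"
  shows "prob_first m x i y = 0"
  using min_dist_le[OF assms(1), of x y] assms(2) by (simp add: prob_first_def)

lemma pl_one:
  assumes "i < m" "\<forall>j<m. j \<noteq> i \<longrightarrow> \<bar>x j - y\<bar> < \<bar>x i - y\<bar>"
  shows "prob_last m x i y = 1"
proof -
  have md: "max_dist m x y = \<bar>x i - y\<bar>"
    unfolding max_dist_def
    apply (rule Max_eqI) using assms by (auto simp: less_imp_le)
  have "{j. j < m \<and> \<bar>x j - y\<bar> = max_dist m x y} = {i}"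
    using assms md by fastforce
  then show ?thesis using md by (simp add: prob_last_def)
qed

lemma pl_zero:
  assumes "j < m" "\<bar>x i - y\<bar> < \<bar>x j - y\<bar>"
  shows "prob_last m x i y = 0"
  using max_dist_ge[OF assms(1), of x y] assms(2) by (simp add: prob_last_def)

lemma pf_le_k:
  assumes "S \<subseteq> {..<m}" "\<forall>j\<in>S. x j = x i" "k \<le> card S" "0 < k"
  shows "prob_first m x i y \<le> 1 / real k"
proof (cases "\<bar>x i - y\<bar> = min_dist m x y")
  case True
  have "S \<subseteq> {j. j < m \<and> \<bar>x j - y\<bar> = min_dist m x y}" using assms True by auto
  moreover have "finite {j. j < m \<and> \<bar>x j - y\<bar> = min_dist m x y}" by auto
  ultimately have "card S \<le> card {j. j < m \<and> \<bar>x j - y\<bar> = min_dist m x y}"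
    by (rule card_mono[rotated])
  then have "k \<le> card {j. j < m \<and> \<bar>x j - y\<bar> = min_dist m x y}" using assms by linarith
  then show ?thesis using True assms(4)
    by (simp add: prob_first_def frac_le)
qed (simp add: prob_first_def)

lemma integrable_F:
  "(\<lambda>y. prob_first m x i y - c * prob_last m x i y) integrable_on {0..1::real}"
proof (rule measurable_bounded_by_integrable_imp_integrable_real[where g="\<lambda>_. 1 + \<bar>c\<bar>"])
  have m1: "(\<lambda>y. prob_first m x i y - c * prob_last m x i y) \<in> borel_measurable borel"
    by (rule borel_measurable_diff[OF meas_pf borel_measurable_times[OF borel_measurable_const meas_pl]])
  then have m2: "(\<lambda>y. prob_first m x i y - c * prob_last m x i y) \<in> borel_measurable lborel"
    by (simp only: measurable_lborel2)
  have m3: "(\<lambda>y. prob_first m x i y - c * prob_last m x i y) \<in> borel_measurable lebesgue"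
    by (rule measurable_completion[OF m2])
  show "(\<lambda>y. prob_first m x i y - c * prob_last m x i y) \<in> borel_measurable (lebesgue_on {0..1})"
    by (rule measurable_restrict_space1[OF m3])
  show "(\<lambda>_. 1 + \<bar>c\<bar>) integrable_on {0..1::real}" by auto
  show "\<bar>prob_first m x i y - c * prob_last m x i y\<bar> \<le> 1 + \<bar>c\<bar>" for y
  proof -
    have "\<bar>c * prob_last m x i y\<bar> \<le> \<bar>c\<bar>"
      using pl_ge0[of m x i y] pl_le1[of m x i y] by (simp add: abs_mult mult_left_le)
    then show ?thesis using pf_ge0[of m x i y] pf_le1[of m x i y] by linarith
  qed
  show "{0..1::real} \<in> sets lebesgue" by simp
qed

lemma int_lower:
  fixes h :: "real \<Rightarrow> real"
  assumes "h integrable_on {p..q}" "p \<le> q" "\<And>y. y \<in> {p..q} \<Longrightarrow> k \<le> h y"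
  shows "k * (q - p) \<le> integral {p..q} h"
proof -
  have "integral {p..q} (\<lambda>_. k) \<le> integral {p..q} h"
    by (rule integral_le) (use assms in auto)
  then show ?thesis using assms(2) by (simp add: mult.commute)
qed

lemma dist_lem1: "(t::real) < u \<Longrightarrow> y < (t+u)/2 \<Longrightarrow> \<bar>t-y\<bar> < \<bar>u-y\<bar>"
  by (cases "t \<le> y"; cases "u \<le> y") (simp_all add: abs_if; linarith)+
lemma dist_lem2: "(u::real) < w \<Longrightarrow> (u+w)/2 < y \<Longrightarrow> \<bar>w-y\<bar> < \<bar>u-y\<bar>"
  by (cases "w \<le> y"; cases "u \<le> y") (simp_all add: abs_if; linarith)+
lemma dist_lem3: "(a::real) < b \<Longrightarrow> b \<le> u \<Longrightarrow> u \<le> A \<Longrightarrow> (a+A)/2 < y \<Longrightarrow> \<bar>u-y\<bar> < \<bar>a-y\<bar>"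
  by (cases "u \<le> y"; cases "a \<le> y") (simp_all add: abs_if; linarith)+

lemma left_side:
  fixes c :: real and m :: nat and x :: "nat \<Rightarrow> real"
  assumes m2: "m \<ge> 2" and c0: "c \<ge> 0" and eq: "bw_equilibrium c m x"
    and card2: "card (positions m x) \<ge> 2"
  shows "mult_at m x (Min (positions m x)) \<ge> 2 \<and> 0 < Min (positions m x)"
proof -
  define P where "P = positions m x"
  have finP: "finite P" by (simp add: P_def positions_def)
  have prof: "\<forall>j<m. 0 \<le> x j \<and> x j \<le> 1" using eq by (auto simp: bw_equilibrium_def is_profile_def)
  have score: "\<forall>i<m. \<forall>t\<in>{0..1}. bw_score c m (x(i:=t)) i \<le> bw_score c m x i"
    using eq by (auto simp: bw_equilibrium_def)
  have Pne: "P \<noteq> {}" using card2 P_def by auto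
  define a where "a = Min P"
  have aP: "a \<in> P" using finP Pne a_def by simp
  have xP: "\<And>j. j < m \<Longrightarrow> x j \<in> P" by (simp add: P_def positions_def)
  have a_le: "\<And>j. j < m \<Longrightarrow> a \<le> x j" using xP finP a_def by simp
  define A where "A = Max P"
  have AP: "A \<in> P" using finP Pne A_def by simp
  have A_ge: "\<And>j. j < m \<Longrightarrow> x j \<le> A" using xP finP A_def by simp
  have "P \<noteq> {a}" using card2 P_def by auto
  then have P'ne: "P - {a} \<noteq> {}" using aP by auto
  define b where "b = Min (P - {a})"
  have bP': "b \<in> P - {a}" using Min_in[OF _ P'ne] finP b_def by auto
  have b_le: "\<And>j. j < m \<Longrightarrow> x j \<noteq> a \<Longrightarrow> b \<le> x j" using xP finP b_def by simp
  obtain jb where jb: "jb < m" "x jb = b" using bP' by (auto simp: P_def positions_def)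
  obtain jA where jA: "jA < m" "x jA = A" using AP by (auto simp: P_def positions_def)
  obtain ja where ja: "ja < m" "a = x ja" using aP by (auto simp: P_def positions_def)
  have ab: "a < b" using a_le[OF jb(1)] bP' jb by auto
  have bA: "b \<le> A" using A_ge[OF jb(1)] jb by simp
  have a0: "0 \<le> a" using prof ja by auto
  have A1: "A \<le> 1" using prof jA by auto
  have mult2: "mult_at m x a \<ge> 2"
  proof (rule ccontr)
    assume nm: "\<not> mult_at m x a \<ge> 2"
    define i where "i = ja"
    have i: "i < m" "x i = a" using ja i_def by auto
    have others: "\<And>j. j < m \<Longrightarrow> j \<noteq> i \<Longrightarrow> b \<le> x j"
    proof -
      fix j assume j: "j < m" "j \<noteq> i"
      show "b \<le> x j"
      proof (rule b_le[OF j(1)])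
        show "x j \<noteq> a"
        proof
          assume "x j = a"
          then have "{i, j} \<subseteq> {k. k < m \<and> x k = a}" using i j by auto
          then have "card {i, j} \<le> mult_at m x a" unfolding mult_at_def
            by (rule card_mono[rotated]) auto
          then show False using nm j by auto
        qed
      qed
    qed
    define t where "t = (a + b) / 2"
    define x' where "x' = x(i := t)"
    define F where "F = (\<lambda>y. prob_first m x i y - c * prob_last m x i y)"
    define G where "G = (\<lambda>y. prob_first m x' i y - c * prob_last m x' i y)"
    define h where "h = (\<lambda>y. G y - F y)"
    have intF: "F integrable_on {0..1}" unfolding F_def by (rule integrable_F)
    have intG: "G integrable_on {0..1}" unfolding G_def by (rule integrable_F)
    have inth: "h integrable_on {0..1}" unfolding h_def using intG intF by (rule integrable_diff)
    have x'i: "x' i = t" and x'j: "\<And>j. j \<noteq> i \<Longrightarrow> x' j = x j" by (auto simp: x'_def)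
    have tb: "t < b" and at: "a < t" using ab by (auto simp: t_def)
    have jbi: "jb \<noteq> i" using jb i ab by auto
    have jAi: "jA \<noteq> i" using jA i ab bA by auto
    have pf1: "prob_first m x' i y = 1" if "y < (t + b) / 2" for y
    proof (rule pf_one[OF i(1)], intro allI impI)
      fix j assume "j < m" "j \<noteq> i"
      then have "b \<le> x j" "x' j = x j" using others x'j by auto
      then show "\<bar>x' i - y\<bar> < \<bar>x' j - y\<bar>" using x'i that tb dist_lem1[of t "x j" y]
        by simp
    qed
    have pf0: "prob_first m x i y = 0" if "(a + b) / 2 < y" for y
      by (rule pf_zero[OF jb(1)]) (use dist_lem2[OF ab that] jb i in simp)
    have plmono: "prob_last m x' i y \<le> prob_last m x i y" for y
    proof (cases "y < (t + A) / 2")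
      case True
      have "prob_last m x' i y = 0"
        by (rule pl_zero[OF jA(1)]) (use dist_lem1[of t A y] True tb bA x'i x'j[OF jAi] jA in auto)
      then show ?thesis using pl_ge0 by simp
    next
      case False
      have "prob_last m x i y = 1"
      proof (rule pl_one[OF i(1)], intro allI impI)
        fix j assume "j < m" "j \<noteq> i"
        then show "\<bar>x j - y\<bar> < \<bar>x i - y\<bar>"
        proof -
          have yy: "(a + A)/2 < y" using False at by (simp add: field_simps)
          show ?thesis using dist_lem3[OF ab others[OF \<open>j < m\<close> \<open>j \<noteq> i\<close>] A_ge[OF \<open>j < m\<close>] yy] i by simp
        qed
      qed
      then show ?thesis using pl_le1 by simp
    qed
    have pfmono: "prob_first m x i y \<le> prob_first m x' i y" for y
    proof (cases "y < (t + b) / 2")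
      case True then show ?thesis using pf1 pf_le1 by simp
    next
      case False then have "(a+b)/2 < y" using at by (simp add: field_simps)
      then show ?thesis using pf0 pf_ge0 by simp
    qed
    have h0: "0 \<le> h y" for y
    proof -
      have "c * (prob_last m x' i y - prob_last m x i y) \<le> 0"
        using c0 plmono[of y] by (simp add: mult_nonneg_nonpos)
      then show ?thesis using pfmono[of y] by (simp add: h_def F_def G_def algebra_simps)
    qed
    have h1: "1 \<le> h y" if "(a + b) / 2 < y" "y < (t + b) / 2" for y
    proof -
      have "c * (prob_last m x' i y - prob_last m x i y) \<le> 0"
        using c0 plmono[of y] by (simp add: mult_nonneg_nonpos)
      then show ?thesis using pf1[OF that(2)] pf0[OF that(1)] by (simp add: h_def F_def G_def algebra_simps)
    qed
    define p where "p = (7*a + 9*b) / 16"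
    define q where "q = (5*a + 11*b) / 16"
    have pq: "p \<le> q" "0 \<le> p" "q \<le> 1" "(a+b)/2 < p" "q < (t+b)/2"
      using ab a0 bA A1 unfolding p_def q_def t_def by auto
    have sub: "{p..q} \<subseteq> {0..1}" using pq by auto
    have "1 * (q - p) \<le> integral {p..q} h"
      by (rule int_lower[OF integrable_on_subinterval[OF inth sub] pq(1)]) (use h1 pq in auto)
    also have "\<dots> \<le> integral {0..1} h"
      by (rule integral_subset_le[OF sub integrable_on_subinterval[OF inth sub] inth]) (use h0 in auto)
    also have "\<dots> = integral {0..1} G - integral {0..1} F"
      unfolding h_def by (rule integral_diff[OF intG intF])
    finally have fin: "1 * (q - p) \<le> integral {0..1} G - integral {0..1} F" .
    have "0 < q - p" using ab unfolding p_def q_def by simp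
    have sF: "bw_score c m x i = integral {0..1} F" by (simp add: bw_score_def F_def)
    have sG: "bw_score c m x' i = integral {0..1} G" by (simp add: bw_score_def G_def)
    have "t \<in> {0..1}" using a0 ab bA A1 by (auto simp: t_def)
    then have "bw_score c m x' i \<le> bw_score c m x i" using score i(1) unfolding x'_def by simp
    then show False using fin \<open>0 < q - p\<close> sF sG by simp
  qed
  have pos: "0 < a"
  proof (rule ccontr)
    assume "\<not> 0 < a"
    then have a00: "a = 0" using a0 by simp
    have fin: "finite {k. k < m \<and> x k = a}" by auto
    have "card {k. k < m \<and> x k = a} \<ge> 2" using mult2 by (simp add: mult_at_def)
    then obtain i where i: "i \<in> {k. k < m \<and> x k = a}" 
      using card.empty[where 'a=nat] by (metis empty_iff ex_in_conv not_numeral_le_zero)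
    have "{k. k < m \<and> x k = a} - {i} \<noteq> {}"
    proof
      assume "{k. k < m \<and> x k = a} - {i} = {}"
      then have "{k. k < m \<and> x k = a} \<subseteq> {i}" by auto
      then have "card {k. k < m \<and> x k = a} \<le> card {i}" by (rule card_mono[rotated]) simp
      then have "card {k. k < m \<and> x k = a} \<le> 1" by simp
      then show False using \<open>card {k. k < m \<and> x k = a} \<ge> 2\<close> by simp
    qed
    then obtain i2 where i2: "i2 < m" "x i2 = 0" "i2 \<noteq> i" using a00 by auto
    have i': "i < m" "x i = 0" using i a00 by auto
    have b0: "0 < b" using ab a00 by simp
    have others: "\<And>j. j < m \<Longrightarrow> j \<noteq> i \<Longrightarrow> x j = 0 \<or> b \<le> x j"
      using b_le a00 by auto
    define t where "t = b / 8"
    define x' where "x' = x(i := t)"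
    define F where "F = (\<lambda>y. prob_first m x i y - c * prob_last m x i y)"
    define G where "G = (\<lambda>y. prob_first m x' i y - c * prob_last m x' i y)"
    define h where "h = (\<lambda>y. G y - F y)"
    have intF: "F integrable_on {0..1}" unfolding F_def by (rule integrable_F)
    have intG: "G integrable_on {0..1}" unfolding G_def by (rule integrable_F)
    have inth: "h integrable_on {0..1}" unfolding h_def using intG intF by (rule integrable_diff)
    have x'i: "x' i = t" and x'j: "\<And>j. j \<noteq> i \<Longrightarrow> x' j = x j" by (auto simp: x'_def)
    have t0: "0 < t" "t < b" using b0 by (auto simp: t_def)
    have jbi: "jb \<noteq> i" using jb i' b0 by auto
    have jAi: "jA \<noteq> i" using jA i' b0 bA by auto
    have pl'0: "prob_last m x' i y = 0" for y
    proof (cases "t / 2 < y")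
      case True
      show ?thesis
        by (rule pl_zero[OF i2(1)]) (use dist_lem2[of 0 t y] True t0 x'i x'j[of i2] i2 in auto)
    next
      case False
      show ?thesis
        by (rule pl_zero[OF jA(1)]) (use dist_lem1[of t A y] False t0 bA x'i x'j[OF jAi] jA in auto)
    qed
    have hge: "prob_first m x' i y - prob_first m x i y \<le> h y" for y
      using pl'0[of y] pl_ge0[of m x i y] c0 by (simp add: h_def F_def G_def)
    have hm1: "-1 \<le> h y" for y
      using hge[of y] pf_ge0[of m x' i y] pf_le1[of m x i y] by linarith
    have pf1: "prob_first m x' i y = 1" if "t \<le> y" "y \<le> b / 2" for y
    proof (rule pf_one[OF i'(1)], intro allI impI)
      fix j assume j: "j < m" "j \<noteq> i"
      then have xj: "x' j = x j" using x'j by auto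
      show "\<bar>x' i - y\<bar> < \<bar>x' j - y\<bar>"
      proof (cases "x j = 0")
        case True then show ?thesis using xj x'i that t0 by auto
      next
        case False
        then have "b \<le> x j" using others j by auto
        then show ?thesis using xj x'i that t0 dist_lem1[of t "x j" y]
          by simp
      qed
    qed
    have pfhalf: "prob_first m x i y \<le> 1 / real 2" for y
      by (rule pf_le_k[of "{i, i2}"]) (use i' i2 in auto)
    have pf0: "prob_first m x i y = 0" if "b / 2 < y" for y
      by (rule pf_zero[OF jb(1)]) (use dist_lem2[of 0 b y] b0 that jb i' in simp)
    have hhalf: "1/2 \<le> h y" if "t \<le> y" "y \<le> b / 2" for y
      using hge[of y] pf1[OF that] pfhalf[of y] by simp
    have hpos: "0 \<le> h y" if "t \<le> y" for y
    proof (cases "y \<le> b / 2")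
      case True then show ?thesis using hhalf[OF that True] by simp
    next
      case False then show ?thesis using hge[of y] pf0[of y] pf_ge0[of m x' i y] by simp
    qed
    have b1: "b \<le> 1" using bA A1 by simp
    have s1: "{0..t} \<subseteq> {0..1}" "{t..1} \<subseteq> {0..1}" "{t..b/2} \<subseteq> {t..1}"
      using t0 b1 by (auto simp: t_def)
    have inth2: "h integrable_on {t..1}" by (rule integrable_on_subinterval[OF inth s1(2)])
    have "integral {0..1} h = integral {0..t} h + integral {t..1} h"
      using Henstock_Kurzweil_Integration.integral_combine[where a=0 and c=t and b=1 and f=h] t0 b1 inth by (simp add: t_def)
    moreover have "(-1) * (t - 0) \<le> integral {0..t} h"
      by (rule int_lower[OF integrable_on_subinterval[OF inth s1(1)]]) (use t0 hm1 in auto)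
    moreover have "1/2 * (b/2 - t) \<le> integral {t..b/2} h"
      by (rule int_lower[OF integrable_on_subinterval[OF inth2 s1(3)]]) (use t0 hhalf in \<open>auto simp: t_def\<close>)
    moreover have "integral {t..b/2} h \<le> integral {t..1} h"
      by (rule integral_subset_le[OF s1(3) integrable_on_subinterval[OF inth2 s1(3)] inth2]) (use hpos in auto)
    ultimately have "0 < integral {0..1} h" using b0 by (simp add: t_def)
    also have "integral {0..1} h = integral {0..1} G - integral {0..1} F"
      unfolding h_def by (rule integral_diff[OF intG intF])
    finally have fin: "0 < integral {0..1} G - integral {0..1} F" .
    have sF: "bw_score c m x i = integral {0..1} F" by (simp add: bw_score_def F_def)
    have sG: "bw_score c m x' i = integral {0..1} G" by (simp add: bw_score_def G_def)
    have "t \<in> {0..1}" using t0 b1 by (auto simp: t_def)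
    then have "bw_score c m x' i \<le> bw_score c m x i" using score i'(1) unfolding x'_def by simp
    then show False using fin sF sG by linarith
  qed
  show ?thesis using mult2 pos by (simp add: a_def P_def)
qed


lemma refl_abs1: "\<bar>(1::real) - u - y\<bar> = \<bar>u - (1 - y)\<bar>"
  by (cases "u + y \<le> 1") auto

lemma pf_refl: "prob_first m (\<lambda>j. 1 - x j) i y = prob_first m x i (1 - y)"
  unfolding prob_first_def min_dist_def by (simp add: refl_abs1)

lemma pl_refl: "prob_last m (\<lambda>j. 1 - x j) i y = prob_last m x i (1 - y)"
  unfolding prob_last_def max_dist_def by (simp add: refl_abs1)

lemma score_refl: "bw_score c m (\<lambda>j. 1 - x j) i = bw_score c m x i"
proof -
  define H where "H = (\<lambda>y. prob_first m x i y - c * prob_last m x i y)"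
  have iH: "H integrable_on {0..1}" unfolding H_def by (rule integrable_F)
  have "(H has_integral integral {0..1} H) (cbox 0 1)"
    unfolding cbox_interval by (rule integrable_integral[OF iH])
  from has_integral_affinity[OF this, of "-1" 1]
  have "((\<lambda>y. H (1 - y)) has_integral integral {0..1} H) ((\<lambda>y. 1 - y) ` {0..1})"
    by simp
  moreover have "(\<lambda>y::real. 1 - y) ` {0..1} = {0..1}"
  proof
    show "(\<lambda>y::real. 1 - y) ` {0..1} \<subseteq> {0..1}" by auto
    show "{0..1} \<subseteq> (\<lambda>y::real. 1 - y) ` {0..1}"
    proof
      fix y :: real assume "y \<in> {0..1}"
      then show "y \<in> (\<lambda>y. 1 - y) ` {0..1}" by (intro image_eqI[of _ _ "1 - y"]) auto
    qed
  qed
  ultimately have "((\<lambda>y. H (1 - y)) has_integral integral {0..1} H) {0..1}" by simp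
  then have "integral {0..1} (\<lambda>y. H (1 - y)) = integral {0..1} H" by (rule integral_unique)
  then show ?thesis
    unfolding bw_score_def pf_refl pl_refl by (simp add: H_def)
qed

lemma eq_refl:
  assumes "bw_equilibrium c m x"
  shows "bw_equilibrium c m (\<lambda>j. 1 - x j)"
  unfolding bw_equilibrium_def
proof (intro conjI allI impI ballI)
  show "is_profile m (\<lambda>j. 1 - x j)" using assms by (auto simp: bw_equilibrium_def is_profile_def)
  fix i t assume i: "i < m" and t: "t \<in> {0..1::real}"
  have e: "(\<lambda>j. 1 - x j)(i := t) = (\<lambda>j. 1 - (x(i := 1 - t)) j)" by (rule ext) auto
  have "1 - t \<in> {0..1}" using t by auto
  then have "bw_score c m (x(i := 1 - t)) i \<le> bw_score c m x i"
    using assms i by (auto simp: bw_equilibrium_def)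
  then show "bw_score c m ((\<lambda>j. 1 - x j)(i := t)) i \<le> bw_score c m (\<lambda>j. 1 - x j) i"
    unfolding e score_refl .
qed

theorem lemma1:
  fixes c :: real and m :: nat and x :: "nat \<Rightarrow> real"
  assumes "m \<ge> 2" and "c \<ge> 0"
    and "bw_equilibrium c m x"
    and "card (positions m x) \<ge> 2"
  shows "mult_at m x (Min (positions m x)) \<ge> 2
       \<and> mult_at m x (Max (positions m x)) \<ge> 2
       \<and> 0 < Min (positions m x) \<and> Max (positions m x) < 1"
proof -
  define xr where "xr = (\<lambda>j. 1 - x j)"
  have posr: "positions m xr = (\<lambda>p. 1 - p) ` positions m x"
    by (auto simp: positions_def xr_def)
  have inj: "inj (\<lambda>p::real. 1 - p)" by (rule injI) simp
  have cardr: "card (positions m xr) = card (positions m x)"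
    unfolding posr by (rule card_image) (use inj in \<open>auto simp: inj_on_def\<close>)
  have L1: "mult_at m x (Min (positions m x)) \<ge> 2 \<and> 0 < Min (positions m x)"
    by (rule left_side[OF assms])
  have eqr: "bw_equilibrium c m xr" unfolding xr_def by (rule eq_refl[OF assms(3)])
  have L2: "mult_at m xr (Min (positions m xr)) \<ge> 2 \<and> 0 < Min (positions m xr)"
    by (rule left_side[OF assms(1,2) eqr]) (use assms(4) cardr in simp)
  have fin: "finite (positions m x)" by (simp add: positions_def)
  have ne: "positions m x \<noteq> {}" using assms(4) by auto
  have "Min (positions m xr) = 1 - Max (positions m x)"
    unfolding posr
  proof (rule Min_eqI)
    show "finite ((\<lambda>p. 1 - p) ` positions m x)" using fin by simp
    show "1 - Max (positions m x) \<in> (\<lambda>p. 1 - p) ` positions m x"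
      using Max_in[OF fin ne] by simp
    show "1 - Max (positions m x) \<le> y" if "y \<in> (\<lambda>p. 1 - p) ` positions m x" for y
      using that Max_ge[OF fin] by auto
  qed
  moreover have "mult_at m xr (1 - p) = mult_at m x p" for p
    by (simp add: mult_at_def xr_def)
  ultimately show ?thesis using L1 L2 by simp
qed

end
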